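(* Let $\hat U_1$ and $\hat U_2$ be real balanced four-splitters with four-splitter matrices $\mathbf R_1$ and $\mathbf R_2$, respectively. Then $\mathbf R_1$ can be transformed into $\mathbf R_2$ by some sequence of row permutations, row negations, and negation of any single column. (Equivalently: let $\mathbf R_1,\mathbf R_2\in\mathrm{O}(4)$ be real orthogonal $4\times 4$ matrices all of whose entries have absolute value $\tfrac12$; then for any fixed column index $c\in\{1,2,3,4\}$, $\mathbf R_2$ can be obtained from $\mathbf R_1$ by a finite sequence of operations each of which is a permutation of the rows, a negation of one row, or a negation of column $c$.)
   Context: For $N$ bosonic modes with annihilation operators $\hat{\mathbf a}=(\hat a_1,\dots,\hat a_N)^T$, a passive linear-optical unitary $\hat U$ is associated with the matrix $\mathbf U\in\mathrm U(N)$ defined by $\hat U^\dagger \hat{\mathbf a}\hat U=\mathbf U\hat{\mathbf a}$. $\hat U$ is a balanced $n$-splitter ($n=N$) if all entries of $\mathbf U$ have the same magnitude; $\mathbf U$ is its $n$-splitter matrix. It is a real balanced $n$-splitter if $\mathbf U\in\mathrm O(n)$ (all entries real). For $n=4$, all entries of a real balanced four-splitter matrix are therefore $\pm\tfrac12$. *)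

theory Defs
  imports "HOL-Analysis.Analysis"
begin

definition real_balanced_four_splitter :: "real^4^4 \<Rightarrow> bool" where
  "real_balanced_four_splitter R \<longleftrightarrow>
     orthogonal_matrix R \<and> (\<forall>i j. \<bar>R $ i $ j\<bar> = 1/2)"

definition permute_rows :: "(4 \<Rightarrow> 4) \<Rightarrow> real^4^4 \<Rightarrow> real^4^4" where
  "permute_rows p R = (\<chi> i j. R $ p i $ j)"

definition negate_row :: "4 \<Rightarrow> real^4^4 \<Rightarrow> real^4^4" where
  "negate_row k R = (\<chi> i j. if i = k then - R $ i $ j else R $ i $ j)"

definition negate_col :: "4 \<Rightarrow> real^4^4 \<Rightarrow> real^4^4" where
  "negate_col c R = (\<chi> i j. if j = c then - R $ i $ j else R $ i $ j)"

inductive splitter_step :: "4 \<Rightarrow> real^4^4 \<Rightarrow> real^4^4 \<Rightarrow> bool" for c where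
  perm: "p permutes UNIV \<Longrightarrow> splitter_step c R (permute_rows p R)"
| negrow: "splitter_step c R (negate_row k R)"
| negcol: "splitter_step c R (negate_col c R)"

definition splitter_reachable :: "4 \<Rightarrow> real^4^4 \<Rightarrow> real^4^4 \<Rightarrow> bool" where
  "splitter_reachable c R1 R2 \<longleftrightarrow> (splitter_step c)\<^sup>*\<^sup>* R1 R2"

end

theory Submission
  imports Defs
begin

lemma row_eq: "row i (A::real^'n^'m) = A $ i"
  by (simp add: row_def vec_eq_iff)

lemma half_sq: "\<bar>x::real\<bar> = 1/2 \<Longrightarrow> x * x = 1/4"
proof -
  assume a: "\<bar>x\<bar> = 1/2"
  have "x*x = \<bar>x\<bar>*\<bar>x\<bar>" by (simp add: abs_mult_self_eq)
  also have "\<dots> = 1/2 * (1/2)" by (simp only: a)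
  finally show ?thesis by simp
qed

lemma bal_iff:
  "real_balanced_four_splitter R \<longleftrightarrow>
    (\<forall>i j. \<bar>R$i$j\<bar> = 1/2) \<and> (\<forall>i k. i \<noteq> k \<longrightarrow> inner (R$i) (R$k) = 0)"
proof -
  have n: "norm (R$i) = 1" if "\<forall>i j. \<bar>R$i$j\<bar> = 1/2" for i
  proof -
    have "inner (R$i) (R$i) = 1"
      using that by (simp add: inner_vec_def sum_4 half_sq)
    then show ?thesis by (simp add: norm_eq_sqrt_inner)
  qed
  have e: "real_balanced_four_splitter R \<longleftrightarrow> ((\<forall>i. norm (R$i) = 1) \<and> (\<forall>i k. i \<noteq> k \<longrightarrow> inner (R$i) (R$k) = 0)) \<and> (\<forall>i j. \<bar>R$i$j\<bar> = 1/2)"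
    unfolding real_balanced_four_splitter_def orthogonal_matrix_orthonormal_rows row_eq orthogonal_def
    by (rule refl)
  show ?thesis
    unfolding e using n by (intro iffI conjI) auto
qed

definition pi4 :: "real^4 \<Rightarrow> real" where
  "pi4 v = (\<Prod>j\<in>UNIV. 2 * v$j)"

lemma pm: "\<bar>x::real\<bar> = 1/2 \<Longrightarrow> 2*x = 1 \<or> 2*x = -1"
  by linarith

lemma pm_cases: "t = 1 \<or> t = -1 \<Longrightarrow> t*t = (1::real)"
  by auto

lemma t_sum_aux:
  fixes t1 t2 t3 t4 :: real
  assumes "t1 = 1 \<or> t1 = -1" "t2 = 1 \<or> t2 = -1" "t3 = 1 \<or> t3 = -1" "t4 = 1 \<or> t4 = -1"
    "t1 + t2 + t3 + t4 = 0"
  shows "t1*t2*t3*t4 = 1"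
  using assms by (elim disjE) simp_all

lemma t_prod_aux:
  fixes t1 t2 t3 t4 :: real
  assumes "t1 = 1 \<or> t1 = -1" "t2 = 1 \<or> t2 = -1" "t3 = 1 \<or> t3 = -1" "t4 = 1 \<or> t4 = -1"
    "t1*t2*t3*t4 = 1" "t1 = -1 \<or> t2 = -1 \<or> t3 = -1 \<or> t4 = -1"
    "t1 = 1 \<or> t2 = 1 \<or> t3 = 1 \<or> t4 = 1"
  shows "t1 + t2 + t3 + t4 = 0"
  using assms by (elim disjE) simp_all

lemma pmmul: "(a::real) = 1 \<or> a = -1 \<Longrightarrow> b = 1 \<or> b = -1 \<Longrightarrow> a*b = 1 \<or> a*b = -1"
  by auto

lemma pi4_4: "pi4 u = (2*u$1)*(2*u$2)*(2*u$3)*(2*u$4)"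
  unfolding pi4_def UNIV_4 by (simp add: mult.assoc)

lemma pi4_pm:
  assumes "\<forall>j. \<bar>u$j\<bar> = 1/2"
  shows "pi4 u = 1 \<or> pi4 u = -1"
proof -
  have a: "2*u$j = 1 \<or> 2*u$j = -1" for j using assms pm by blast
  show ?thesis unfolding pi4_4 using pmmul[OF pmmul[OF pmmul[OF a[of 1] a[of 2]] a[of 3]] a[of 4]] .
qed

lemma pi_orth:
  assumes u: "\<forall>j. \<bar>u$j\<bar> = 1/2" and w: "\<forall>j. \<bar>w$j\<bar> = 1/2" and o: "inner u w = 0"
  shows "pi4 u = pi4 w"
proof -
  define t where "t j = (2*u$j)*(2*w$j)" for j
  have t: "t j = 1 \<or> t j = -1" for j unfolding t_def using pmmul[OF pm[of "u$j"] pm[of "w$j"]] u w by blast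
  have "t 1 + t 2 + t 3 + t 4 = 4 * inner u w"
    by (simp add: t_def inner_vec_def sum_4 algebra_simps)
  then have "t 1 * t 2 * t 3 * t 4 = 1" using o t_sum_aux[OF t[of 1] t[of 2] t[of 3] t[of 4]] by simp
  moreover have "t 1 * t 2 * t 3 * t 4 = pi4 u * pi4 w"
    by (simp add: t_def pi4_4 algebra_simps)
  ultimately have "pi4 u * pi4 w = 1" by simp
  then show ?thesis using pi4_pm[OF w] by auto
qed

lemma dot_zero:
  assumes u: "\<forall>j. \<bar>u$j\<bar> = 1/2" and w: "\<forall>j. \<bar>w$j\<bar> = 1/2"
    and c: "u$c = w$c" and p: "pi4 u = pi4 w" and ne: "u \<noteq> w"
  shows "inner u w = 0"
proof -
  define t where "t j = (2*u$j)*(2*w$j)" for j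
  have t: "t j = 1 \<or> t j = -1" for j unfolding t_def using pmmul[OF pm[of "u$j"] pm[of "w$j"]] u w by blast
  obtain k where k: "u$k \<noteq> w$k" using ne by (auto simp: vec_eq_iff)
  have e: "t k = (2*u$k)*(2*w$k)" by (simp add: t_def)
  have "2*u$k = 1 \<and> 2*w$k = -1 \<or> 2*u$k = -1 \<and> 2*w$k = 1"
    using pm[of "u$k"] pm[of "w$k"] u w k by auto
  then have tk: "t k = -1"
  proof (elim disjE conjE)
    assume a: "2*u$k = 1" "2*w$k = -1" then show ?thesis unfolding e a by simp
  next
    assume a: "2*u$k = -1" "2*w$k = 1" then show ?thesis unfolding e a by simp
  qed
  have "t c = (2*u$c)*(2*u$c)" using c by (simp add: t_def)
  moreover have "(2*u$c)*(2*u$c) = 1" using pm_cases pm u by blast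
  ultimately have tc: "t c = 1" by simp
  have "t 1 * t 2 * t 3 * t 4 = pi4 u * pi4 w"
    by (simp add: t_def pi4_4 algebra_simps)
  also have "\<dots> = 1" using p pi4_pm[OF w] by auto
  finally have pr: "t 1 * t 2 * t 3 * t 4 = 1" .
  have "t 1 = -1 \<or> t 2 = -1 \<or> t 3 = -1 \<or> t 4 = -1" using tk exhaust_4[of k] by auto
  moreover have "t 1 = 1 \<or> t 2 = 1 \<or> t 3 = 1 \<or> t 4 = 1" using tc exhaust_4[of c] by auto
  ultimately have "t 1 + t 2 + t 3 + t 4 = 0" using t_prod_aux[OF t[of 1] t[of 2] t[of 3] t[of 4] pr] by blast
  moreover have "t 1 + t 2 + t 3 + t 4 = 4 * inner u w"
    by (simp add: t_def inner_vec_def sum_4 algebra_simps)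
  ultimately show ?thesis by simp
qed

lemma perm_row [simp]: "permute_rows p R $ i = R $ p i"
  by (simp add: permute_rows_def vec_eq_iff)

lemma negrow_row [simp]: "negate_row k R $ i = (if i = k then - R$i else R$i)"
  by (simp add: negate_row_def vec_eq_iff)

lemma negcol_ent [simp]: "negate_col c R $ i $ j = (if j = c then - R$i$j else R$i$j)"
  by (simp add: negate_col_def)

lemma self_inner:
  assumes "\<forall>j. \<bar>u$j\<bar> = 1/2" shows "inner u (u::real^4) = 1"
  using assms by (simp add: inner_vec_def sum_4 half_sq)

lemma step_bal:
  assumes "splitter_step c R S" "real_balanced_four_splitter R"
  shows "real_balanced_four_splitter S"
  using assms
proof (induction rule: splitter_step.induct)
  case (perm p R)
  then have "inj p" using permutes_inj by blast
  then show ?case using perm unfolding bal_iff by (auto simp: inj_eq)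
next
  case (negrow R k)
  then show ?case unfolding bal_iff by auto
next
  case (negcol R)
  have "inner (negate_col c R $ i) (negate_col c R $ k) = inner (R$i) (R$k)" for i k
    unfolding inner_vec_def by (rule sum.cong) auto
  then show ?case using negcol unfolding bal_iff by auto
qed

lemma reach_bal:
  assumes "(splitter_step c)\<^sup>*\<^sup>* R S" "real_balanced_four_splitter R"
  shows "real_balanced_four_splitter S"
  using assms by (induction rule: rtranclp_induct) (auto intro: step_bal)

lemma step_sym:
  assumes "splitter_step c R S"
  shows "(splitter_step c)\<^sup>*\<^sup>* S R"
  using assms
proof (induction rule: splitter_step.induct)
  case (perm p R)
  have "permute_rows (inv p) (permute_rows p R) = R"
    using permutes_inverses(1)[OF perm] by (simp add: vec_eq_iff)
  moreover have "splitter_step c (permute_rows p R) (permute_rows (inv p) (permute_rows p R))"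
    using perm permutes_inv splitter_step.perm by blast
  ultimately show ?case by simp
next
  case (negrow R k)
  have "negate_row k (negate_row k R) = R" by (simp add: vec_eq_iff)
  then show ?case using splitter_step.negrow by (metis r_into_rtranclp)
next
  case (negcol R)
  have "negate_col c (negate_col c R) = R" by (simp add: vec_eq_iff)
  then show ?case using splitter_step.negcol by (metis r_into_rtranclp)
qed

lemma reach_sym:
  assumes "(splitter_step c)\<^sup>*\<^sup>* R S"
  shows "(splitter_step c)\<^sup>*\<^sup>* S R"
  using assms
proof (induction rule: rtranclp_induct)
  case base then show ?case by simp
next
  case (step y z)
  then show ?case using step_sym by (metis rtranclp_trans)
qed

lemma pi_rows:
  assumes "real_balanced_four_splitter R"
  shows "pi4 (R$i) = pi4 (R$k)"
proof (cases "i = k")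
  case False
  then show ?thesis using assms pi_orth unfolding bal_iff by blast
qed simp

lemma pi_negcol: "pi4 (negate_col c R $ i) = - pi4 (R$i)"
proof -
  have "pi4 (negate_col c R $ i) = 2 * (negate_col c R $ i $ c) * (\<Prod>j\<in>UNIV - {c}. 2 * (negate_col c R $ i $ j))"
    unfolding pi4_def by (subst prod.remove[of UNIV c]) simp_all
  also have "\<dots> = - (2 * R$i$c * (\<Prod>j\<in>UNIV - {c}. 2 * R$i$j))"
  proof -
    have "(\<Prod>j\<in>UNIV - {c}. 2 * (negate_col c R $ i $ j)) = (\<Prod>j\<in>UNIV - {c}. 2 * R$i$j)"
      by (rule prod.cong) auto
    then show ?thesis by simp
  qed
  also have "\<dots> = - pi4 (R$i)"
    unfolding pi4_def by (subst prod.remove[of UNIV c]) simp_all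
  finally show ?thesis .
qed

lemma pi_neg: "pi4 (- v) = pi4 v"
  by (simp add: pi4_4)

definition negset :: "4 set \<Rightarrow> real^4^4 \<Rightarrow> real^4^4" where
  "negset K R = (\<chi> i. if i \<in> K then - R$i else R$i)"

lemma negset_reach: "(splitter_step c)\<^sup>*\<^sup>* R (negset K R)"
proof -
  have "finite K" by simp
  then show ?thesis
  proof (induction K rule: finite_induct)
    case empty
    have "negset {} R = R" by (simp add: negset_def vec_eq_iff)
    then show ?case by simp
  next
    case (insert k K)
    have "negset (insert k K) R = negate_row k (negset K R)"
      using insert(2) by (simp add: negset_def vec_eq_iff)
    then show ?case using insert(3) splitter_step.negrow
      by (metis rtranclp.rtrancl_into_rtrancl)
  qed
qed

definition normal4 :: "4 \<Rightarrow> real^4^4 \<Rightarrow> bool" where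
  "normal4 c N \<longleftrightarrow> real_balanced_four_splitter N \<and> (\<forall>i. N$i$c = 1/2) \<and> (\<forall>i. pi4 (N$i) = 1)"

lemma to_normal:
  assumes "real_balanced_four_splitter R"
  shows "\<exists>N. (splitter_step c)\<^sup>*\<^sup>* R N \<and> normal4 c N"
proof -
  define R' where "R' = (if pi4 (R$1) = 1 then R else negate_col c R)"
  have r1: "(splitter_step c)\<^sup>*\<^sup>* R R'"
    unfolding R'_def using splitter_step.negcol by auto
  have b1: "real_balanced_four_splitter R'" using reach_bal[OF r1 assms] .
  have pm1: "pi4 (R$1) = 1 \<or> pi4 (R$1) = -1"
    using pi4_pm assms unfolding bal_iff by blast
  have p1: "pi4 (R'$i) = 1" for i
    using pm1 pi_rows[OF assms, of i 1] pi_negcol[of c R i] unfolding R'_def by auto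
  define N where "N = negset {i. R'$i$c < 0} R'"
  have r2: "(splitter_step c)\<^sup>*\<^sup>* R' N" unfolding N_def by (rule negset_reach)
  have b2: "real_balanced_four_splitter N" using reach_bal[OF r2 b1] .
  have Ni: "N$i = (if R'$i$c < 0 then - R'$i else R'$i)" for i
    by (simp add: N_def negset_def)
  have "N$i$c = 1/2" for i
  proof -
    have "\<bar>R'$i$c\<bar> = 1/2" using b1 unfolding bal_iff by blast
    then show ?thesis unfolding Ni by (cases "R'$i$c < 0") auto
  qed
  moreover have "pi4 (N$i) = 1" for i using p1 pi_neg Ni by simp
  ultimately show ?thesis unfolding normal4_def using b2 r1 r2
    by (meson rtranclp_trans)
qed

lemma normal_perm:
  assumes n1: "normal4 c N1" and n2: "normal4 c N2"
  shows "\<exists>p. p permutes UNIV \<and> N2 = permute_rows p N1"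
proof -
  have b1: "\<forall>i j. \<bar>N1$i$j\<bar> = 1/2" "\<forall>i k. i \<noteq> k \<longrightarrow> inner (N1$i) (N1$k) = 0"
    using n1 unfolding normal4_def bal_iff by auto
  have b2: "\<forall>i j. \<bar>N2$i$j\<bar> = 1/2" "\<forall>i k. i \<noteq> k \<longrightarrow> inner (N2$i) (N2$k) = 0"
    using n2 unfolding normal4_def bal_iff by auto
  have ex: "\<exists>k. N1$k = N2$i" for i
  proof (rule ccontr)
    assume "\<not> ?thesis"
    then have ne: "N1$k \<noteq> N2$i" for k by blast
    have "inner (N1$k) (N2$i) = 0" for k
    proof (rule dot_zero[of "N1$k" "N2$i" c])
      show "\<forall>j. \<bar>N1$k$j\<bar> = 1/2" using b1(1) by blast
      show "\<forall>j. \<bar>N2$i$j\<bar> = 1/2" using b2(1) by blast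
      have "N1$k$c = 1/2" "N2$i$c = 1/2" using n1 n2 unfolding normal4_def by blast+
      then show "N1$k$c = N2$i$c" by simp
      show "pi4 (N1$k) = pi4 (N2$i)" using n1 n2 unfolding normal4_def by simp
      show "N1$k \<noteq> N2$i" by (rule ne)
    qed
    then have z: "N1 *v (N2$i) = 0" by (simp add: vec_eq_iff matrix_vector_mul_component)
    have "transpose N1 ** N1 = mat 1" using n1 unfolding normal4_def real_balanced_four_splitter_def orthogonal_matrix_def by simp
    then have "N2$i = transpose N1 *v (N1 *v (N2$i))"
      by (simp add: matrix_vector_mul_assoc)
    then have "N2$i = 0" using z by simp
    moreover have "N2$i$c = 1/2" using n2 unfolding normal4_def by blast
    ultimately show False by simp
  qed
  define p where "p i = (SOME k. N1$k = N2$i)" for i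
  have pe: "N1 $ p i = N2 $ i" for i using someI_ex[OF ex[of i]] unfolding p_def .
  have "inj p"
  proof (rule injI)
    fix i k assume "p i = p k"
    then have e: "N2$i = N2$k" using pe by metis
    show "i = k"
    proof (rule ccontr)
      assume "i \<noteq> k"
      then have "inner (N2$i) (N2$k) = 0" using b2 by blast
      moreover have "inner (N2$i) (N2$i) = 1" using b2 self_inner by blast
      ultimately show False using e by simp
    qed
  qed
  moreover have "surj p" using finite_UNIV_inj_surj[OF _ \<open>inj p\<close>] by simp
  ultimately have "bij p" by (simp add: bij_def)
  then have "p permutes UNIV" using bij_imp_permutes[of p UNIV] by simp
  moreover have "N2 = permute_rows p N1" using pe by (simp add: vec_eq_iff)
  ultimately show ?thesis by blast
qed

theorem theorem1:
  fixes R1 R2 :: "real^4^4" and c :: 4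
  assumes "real_balanced_four_splitter R1"
      and "real_balanced_four_splitter R2"
  shows "splitter_reachable c R1 R2"
proof -
  obtain N1 where a: "(splitter_step c)\<^sup>*\<^sup>* R1 N1" "normal4 c N1" using to_normal assms(1) by blast
  obtain N2 where b: "(splitter_step c)\<^sup>*\<^sup>* R2 N2" "normal4 c N2" using to_normal assms(2) by blast
  obtain p where "p permutes UNIV" "N2 = permute_rows p N1" using normal_perm a(2) b(2) by blast
  then have "splitter_step c N1 N2" using splitter_step.perm by simp
  then have "(splitter_step c)\<^sup>*\<^sup>* R1 N2" using a(1) by (metis rtranclp.rtrancl_into_rtrancl)
  moreover have "(splitter_step c)\<^sup>*\<^sup>* N2 R2" using reach_sym b(1) .
  ultimately show ?thesis unfolding splitter_reachable_def by (metis rtranclp_trans)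
qed

end
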